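(* Let $X$ be a complex Banach space with two bounded symmetric pairs $(Q,V)$ and $(R,W)$. Let $h\in\{1,-1\}$ and $c\ge0$. Assume $hQ$ is positive semi-definite and $\gamma(Q)>0$. Let $V_0\subset V^Q$ and $W_0\subset W^R$ be closed linear subspaces of $X$ with $n:=\dim V^Q/V_0$ finite. Assume $$\delta(W,V)+\delta(V_0,W_0)<\frac{1}{2^{n+1}(n+1)}.$$ Set $\delta:=\frac{2^{n+1}(n+1)\delta(W,V)}{1-2^{n+1}(n+1)\delta(W,V)}$, $d:=\gamma(Q)^{-1}$, $e:=2\delta_c(Q,R)$, $f:=2\delta_c(Q,R)+2c$, and assume $$\big(d(2+\delta)(e+f\delta)\big)^{1/2}<\frac{1-2^{n+1}(n+1)(\delta(W,V)+\delta(V_0,W_0))}{2^{n+1}(n+1)(1+\delta(V_0,W_0))}.$$ Then $m^-(hR)+\dim W^R/W_0\le n$.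
   Context: A bounded symmetric pair $(Q,V)$ consists of a closed subspace $V\subset X$ and a Hermitian sesquilinear form $Q\colon V\times V\to\mathbb{C}$ with $\sup_{x,y\in V\setminus\{0\}}|Q(x,y)|/(\|x\|\|y\|)<\infty$. $V^Q:=\{u\in V: Q(u,v)=0\ \forall v\in V\}$ (similarly $W^R$). For a bounded semi-definite form $Q$ on $V$, $\gamma(Q):=\inf_{x\in V\setminus V^Q}|Q(x,x)|/\operatorname{dist}(x,V^Q)^2$ ($0$ if $V=\{0\}$). $m^-(hR)$ is the supremum of dimensions of subspaces of $W$ on which $hR$ is negative definite. For linear subspaces $A,B$: $\delta(A,B):=\sup_{u\in A,\|u\|=1}\operatorname{dist}(u,B)$ ($0$ if $A=\{0\}$). $\delta_c(Q,R)$ is the infimum of $\delta'\ge0$ such that $|Q(x,y)-R(u,v)|\le\delta'(\|u\|+\|x\|)(\|v\|+\|y\|)+c\big((\|u\|+\|x\|)\|v-y\|+\|u-x\|(\|v\|+\|y\|)\big)$ for all $x,y\in V$, $u,v\in W$. *)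

theory Defs
  imports "HOL-Analysis.Analysis"
begin

class complex_normed_vector = real_normed_vector +
  fixes scaleC :: "complex \<Rightarrow> 'a \<Rightarrow> 'a" (infixr "*\<^sub>C" 75)
  assumes scaleC_add_right: "a *\<^sub>C (x + y) = a *\<^sub>C x + a *\<^sub>C y"
    and scaleC_add_left: "(a + b) *\<^sub>C x = a *\<^sub>C x + b *\<^sub>C x"
    and scaleC_scaleC: "a *\<^sub>C (b *\<^sub>C x) = (a * b) *\<^sub>C x"
    and scaleC_one: "1 *\<^sub>C x = x"
    and scaleR_scaleC: "r *\<^sub>R x = complex_of_real r *\<^sub>C x"
    and norm_scaleC: "norm (a *\<^sub>C x) = cmod a * norm x"

text \<open>A complex Banach space is a complete complex normed vector space:
  type class constraint {complex_normed_vector, complete_space}.\<close>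

definition csubspace :: "'a::complex_normed_vector set \<Rightarrow> bool" where
  "csubspace V \<longleftrightarrow> 0 \<in> V \<and> (\<forall>x\<in>V. \<forall>y\<in>V. x + y \<in> V) \<and> (\<forall>a. \<forall>x\<in>V. a *\<^sub>C x \<in> V)"

definition closed_csubspace :: "'a::complex_normed_vector set \<Rightarrow> bool" where
  "closed_csubspace V \<longleftrightarrow> csubspace V \<and> closed V"

text \<open>Hermitian sesquilinear form on V (linear in the first argument; conjugate
  linearity in the second follows from the Hermitian symmetry).\<close>
definition hermitian_sesq :: "'a::complex_normed_vector set \<Rightarrow> ('a \<Rightarrow> 'a \<Rightarrow> complex) \<Rightarrow> bool" where
  "hermitian_sesq V Q \<longleftrightarrow>
     (\<forall>x\<in>V. \<forall>y\<in>V. \<forall>z\<in>V. Q (x + y) z = Q x z + Q y z) \<and>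
     (\<forall>a. \<forall>x\<in>V. \<forall>z\<in>V. Q (a *\<^sub>C x) z = a * Q x z) \<and>
     (\<forall>x\<in>V. \<forall>y\<in>V. Q y x = cnj (Q x y))"

definition bounded_symmetric_pair :: "('a::complex_normed_vector \<Rightarrow> 'a \<Rightarrow> complex) \<Rightarrow> 'a set \<Rightarrow> bool" where
  "bounded_symmetric_pair Q V \<longleftrightarrow> closed_csubspace V \<and> hermitian_sesq V Q \<and>
     (\<exists>M. \<forall>x\<in>V. \<forall>y\<in>V. cmod (Q x y) \<le> M * norm x * norm y)"

definition radical :: "('a \<Rightarrow> 'a \<Rightarrow> complex) \<Rightarrow> 'a set \<Rightarrow> 'a set" where
  "radical Q V = {u\<in>V. \<forall>v\<in>V. Q u v = 0}"

text \<open>gamma(Q), with value in the extended reals (infimum of the empty set is +infinity).\<close>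
definition gamma_form :: "('a::complex_normed_vector \<Rightarrow> 'a \<Rightarrow> complex) \<Rightarrow> 'a set \<Rightarrow> ereal" where
  "gamma_form Q V = (if V = {0} then 0 else
     (INF x\<in>V - radical Q V. ereal (cmod (Q x x) / (infdist x (radical Q V))\<^sup>2)))"

definition cindep_mod :: "(nat \<Rightarrow> 'a::complex_normed_vector) \<Rightarrow> nat \<Rightarrow> 'a set \<Rightarrow> bool" where
  "cindep_mod u k B \<longleftrightarrow>
     (\<forall>c::nat \<Rightarrow> complex. (\<Sum>i<k. c i *\<^sub>C u i) \<in> B \<longrightarrow> (\<forall>i<k. c i = 0))"

definition qdim :: "'a::complex_normed_vector set \<Rightarrow> 'a set \<Rightarrow> enat" where
  "qdim A B = Sup {enat k | k. \<exists>u. (\<forall>i<k. u i \<in> A) \<and> cindep_mod u k B}"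

text \<open>m^-(R) on W: supremum of the dimensions of subspaces of W on which R is negative
  definite; a k-dimensional subspace is the span of k linearly independent vectors.\<close>
definition neg_index :: "('a::complex_normed_vector \<Rightarrow> 'a \<Rightarrow> complex) \<Rightarrow> 'a set \<Rightarrow> enat" where
  "neg_index R W = Sup {enat k | k. \<exists>u. (\<forall>i<k. u i \<in> W) \<and> cindep_mod u k {0} \<and>
      (\<forall>c::nat \<Rightarrow> complex. (\<Sum>i<k. c i *\<^sub>C u i) \<noteq> 0 \<longrightarrow>
          Re (R (\<Sum>i<k. c i *\<^sub>C u i) (\<Sum>i<k. c i *\<^sub>C u i)) < 0)}"

definition gap :: "'a::real_normed_vector set \<Rightarrow> 'a set \<Rightarrow> real" where
  "gap A B = (if A \<subseteq> {0} then 0 else (SUP u\<in>{u\<in>A. norm u = 1}. infdist u B))"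

definition delta_c :: "real \<Rightarrow> ('a::complex_normed_vector \<Rightarrow> 'a \<Rightarrow> complex) \<Rightarrow> 'a set \<Rightarrow>
    ('a \<Rightarrow> 'a \<Rightarrow> complex) \<Rightarrow> 'a set \<Rightarrow> real" where
  "delta_c c Q V R W = Inf {d. d \<ge> 0 \<and> (\<forall>x\<in>V. \<forall>y\<in>V. \<forall>u\<in>W. \<forall>v\<in>W.
      cmod (Q x y - R u v) \<le> d * (norm u + norm x) * (norm v + norm y)
        + c * ((norm u + norm x) * norm (v - y) + norm (u - x) * (norm v + norm y)))}"

end

theory Submission
  imports Defs
begin

lemma cvs: "vector_space (scaleC :: complex \<Rightarrow> 'a::complex_normed_vector \<Rightarrow> 'a)"
  by unfold_locales (simp_all add: scaleC_add_right scaleC_add_left scaleC_scaleC scaleC_one)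

interpretation cv: vector_space "scaleC :: complex \<Rightarrow> 'a::complex_normed_vector \<Rightarrow> 'a"
  by (rule cvs)

lemma csub_zero: "csubspace S \<Longrightarrow> 0 \<in> S"
  by (simp add: csubspace_def)
lemma csub_add: "csubspace S \<Longrightarrow> x \<in> S \<Longrightarrow> y \<in> S \<Longrightarrow> x + y \<in> S"
  by (simp add: csubspace_def)
lemma csub_scale: "csubspace S \<Longrightarrow> x \<in> S \<Longrightarrow> a *\<^sub>C x \<in> S"
  by (simp add: csubspace_def)
lemma csub_neg: "csubspace S \<Longrightarrow> x \<in> S \<Longrightarrow> - x \<in> S"
  using csub_scale[of S x "-1"] by (simp add: cv.scale_minus_left scaleC_one)
lemma csub_diff: "csubspace S \<Longrightarrow> x \<in> S \<Longrightarrow> y \<in> S \<Longrightarrow> x - y \<in> S"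
  using csub_add[of S x "-y"] csub_neg[of S y] by simp
lemma csub_sum0:
  assumes "csubspace S" "finite I" shows "(\<forall>i\<in>I. f i \<in> S) \<longrightarrow> sum f I \<in> S"
  using assms(2) by (induction I rule: finite_induct) (auto simp: csub_zero[OF assms(1)] csub_add[OF assms(1)])
lemma csub_sum: "csubspace S \<Longrightarrow> finite I \<Longrightarrow> (\<And>i. i \<in> I \<Longrightarrow> f i \<in> S) \<Longrightarrow> sum f I \<in> S"
  using csub_sum0 by blast
lemma csub_lincomb: "csubspace S \<Longrightarrow> (\<And>i. i < (k::nat) \<Longrightarrow> u i \<in> S) \<Longrightarrow> (\<Sum>i<k. c i *\<^sub>C u i) \<in> S"
  by (rule csub_sum) (auto intro: csub_scale)

lemma infdist_less_ex:
  assumes "A \<noteq> {}" "infdist x A < d"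
  shows "\<exists>a\<in>A. dist x a < d"
proof (rule ccontr)
  assume "\<not> ?thesis"
  then have "d \<le> infdist x A" using assms(1)
    unfolding infdist_notempty[OF assms(1)] by (intro cINF_greatest) auto
  with assms(2) show False by simp
qed

lemma le_infdist:
  assumes "A \<noteq> {}" "\<And>a. a \<in> A \<Longrightarrow> d \<le> dist x a"
  shows "d \<le> infdist x A"
  unfolding infdist_notempty[OF assms(1)] using assms by (intro cINF_greatest) auto

lemma infdist_scale_le:
  assumes Y: "csubspace Y"
  shows "infdist (a *\<^sub>C x) Y \<le> cmod a * infdist x Y"
proof (cases "a = 0")
  case True
  then show ?thesis using csub_zero[OF Y] by (simp add: infdist_nonneg)
next
  case False
  have ne: "Y \<noteq> {}" using csub_zero[OF Y] by auto
  have "infdist (a *\<^sub>C x) Y / cmod a \<le> infdist x Y"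
  proof (rule le_infdist[OF ne])
    fix z assume z: "z \<in> Y"
    have "infdist (a *\<^sub>C x) Y \<le> dist (a *\<^sub>C x) (a *\<^sub>C z)"
      by (rule infdist_le) (rule csub_scale[OF Y z])
    also have "\<dots> = cmod a * dist x z"
      by (simp add: dist_norm norm_scaleC flip: cv.scale_right_diff_distrib)
    finally show "infdist (a *\<^sub>C x) Y / cmod a \<le> dist x z"
      using False by (simp add: divide_simps mult.commute)
  qed
  then show ?thesis using False by (simp add: divide_simps mult.commute)
qed

lemma infdist_scale:
  assumes Y: "csubspace Y" and a: "a \<noteq> 0"
  shows "infdist (a *\<^sub>C x) Y = cmod a * infdist x Y"
proof (rule antisym)
  show "infdist (a *\<^sub>C x) Y \<le> cmod a * infdist x Y" by (rule infdist_scale_le[OF Y])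
  have "infdist x Y = infdist (inverse a *\<^sub>C (a *\<^sub>C x)) Y"
    using a by (simp add: scaleC_scaleC scaleC_one)
  also have "\<dots> \<le> cmod (inverse a) * infdist (a *\<^sub>C x) Y" by (rule infdist_scale_le[OF Y])
  finally have "cmod a * infdist x Y \<le> cmod a * (cmod (inverse a) * infdist (a *\<^sub>C x) Y)"
    by (simp add: mult_left_mono)
  also have "\<dots> = infdist (a *\<^sub>C x) Y" using a by (simp add: norm_inverse)
  finally show "cmod a * infdist x Y \<le> infdist (a *\<^sub>C x) Y" .
qed

lemma infdist_translate_le:
  assumes Y: "csubspace Y" and y: "y \<in> Y"
  shows "infdist (x + y) Y \<le> infdist x Y"
proof -
  have ne: "Y \<noteq> {}" using y by auto
  show ?thesis
  proof (rule le_infdist[OF ne])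
    fix z assume z: "z \<in> Y"
    have "infdist (x + y) Y \<le> dist (x + y) (z + y)"
      by (rule infdist_le) (rule csub_add[OF Y z y])
    also have "\<dots> = dist x z" by (simp add: dist_norm)
    finally show "infdist (x + y) Y \<le> dist x z" .
  qed
qed

lemma infdist_translate:
  assumes Y: "csubspace Y" and y: "y \<in> Y"
  shows "infdist (x + y) Y = infdist x Y"
proof (rule antisym)
  show "infdist (x + y) Y \<le> infdist x Y" by (rule infdist_translate_le[OF Y y])
  have "infdist ((x + y) + (- y)) Y \<le> infdist (x + y) Y"
    by (rule infdist_translate_le[OF Y csub_neg[OF Y y]])
  then show "infdist x Y \<le> infdist (x + y) Y" by simp
qed

lemma unit_in_csub:
  assumes A: "csubspace A" and y: "y \<in> A" "y \<noteq> 0"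
  shows "complex_of_real (1 / norm y) *\<^sub>C y \<in> A"
    "norm (complex_of_real (1 / norm y) *\<^sub>C y) = 1"
    "complex_of_real (norm y) *\<^sub>C (complex_of_real (1 / norm y) *\<^sub>C y) = y"
  using y by (auto simp: csub_scale[OF A] norm_scaleC scaleC_scaleC scaleC_one norm_divide
       simp flip: of_real_mult)

lemma gap_bdd:
  assumes B: "csubspace B"
  shows "bdd_above ((\<lambda>u. infdist u B) ` {u\<in>A. norm u = 1})"
proof (rule bdd_aboveI2)
  fix u assume "u \<in> {u\<in>A. norm u = 1}"
  then show "infdist u B \<le> 1"
    using infdist_le[OF csub_zero[OF B], of u] by simp
qed

lemma gap_le:
  assumes A: "csubspace A" and B: "csubspace B" and y: "y \<in> A"
  shows "infdist y B \<le> gap A B * norm y"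
proof (cases "y = 0")
  case True
  then show ?thesis using csub_zero[OF B] by simp
next
  case False
  let ?u = "complex_of_real (1 / norm y) *\<^sub>C y"
  note U = unit_in_csub[OF A y False]
  have nz: "\<not> A \<subseteq> {0}" using y False by auto
  have "infdist ?u B \<le> gap A B"
    unfolding gap_def using nz U by (auto intro!: cSUP_upper gap_bdd[OF B])
  moreover have "infdist y B = norm y * infdist ?u B"
    using infdist_scale[OF B, of "complex_of_real (norm y)" ?u] U False by simp
  ultimately show ?thesis by (simp add: mult.commute mult_left_mono)
qed

lemma gap_nonneg:
  assumes A: "csubspace A" and B: "csubspace B"
  shows "0 \<le> gap A B"
proof (cases "A \<subseteq> {0}")
  case True then show ?thesis by (simp add: gap_def)
next
  case False
  then obtain y where y: "y \<in> A" "y \<noteq> 0" by auto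
  have "infdist y B \<le> gap A B * norm y" by (rule gap_le[OF A B y(1)])
  moreover have "infdist y B \<ge> 0" by (rule infdist_nonneg)
  ultimately have "0 \<le> gap A B * norm y" by linarith
  then show ?thesis using y by (simp add: zero_le_mult_iff)
qed

lemma infdist_neg: "csubspace Y \<Longrightarrow> infdist (- x) Y = infdist x Y"
  using infdist_scale[of Y "-1" x] by (simp add: cv.scale_minus_left scaleC_one)

lemma closed_add_line:
  assumes Y: "csubspace Y" "closed Y" and v: "v \<notin> Y"
  shows "closed {y + t *\<^sub>C v | y t. y \<in> Y}" (is "closed ?S")
proof -
  have ne: "Y \<noteq> {}" using csub_zero[OF Y(1)] by auto
  have r: "infdist v Y > 0" by (rule infdist_pos_not_in_closed[OF Y(2) ne v])
  define r where "r = infdist v Y"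
  have "z \<in> ?S" if z: "z \<in> closure ?S" for z
  proof (rule ccontr)
    assume zS: "z \<notin> ?S"
    define \<phi> where "\<phi> t = infdist (z - t *\<^sub>C v) Y" for t
    have lip: "(norm v)-lipschitz_on UNIV \<phi>"
    proof (rule lipschitz_onI)
      fix s t :: complex
      have "dist (\<phi> s) (\<phi> t) \<le> dist (z - s *\<^sub>C v) (z - t *\<^sub>C v)"
        unfolding \<phi>_def dist_real_def by (rule infdist_triangle_abs)
      also have "\<dots> = norm ((t - s) *\<^sub>C v)"
        by (simp add: dist_norm cv.scale_left_diff_distrib)
      also have "\<dots> = norm v * dist s t"
        by (simp add: norm_scaleC dist_norm norm_minus_commute)
      finally show "dist (\<phi> s) (\<phi> t) \<le> norm v * dist s t" .
    qed simp
    have cont: "continuous_on UNIV \<phi>" by (rule lipschitz_on_continuous_on[OF lip])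
    have lower: "cmod t * r - norm z \<le> \<phi> t" for t
    proof -
      have "cmod t * r = infdist (t *\<^sub>C v) Y"
        using infdist_scale[OF Y(1), of t v] csub_zero[OF Y(1)] unfolding r_def
        by (cases "t = 0") auto
      also have "\<dots> \<le> infdist (t *\<^sub>C v - z) Y + dist (t *\<^sub>C v) (t *\<^sub>C v - z)"
        by (rule infdist_triangle)
      also have "infdist (t *\<^sub>C v - z) Y = \<phi> t"
        unfolding \<phi>_def using infdist_neg[OF Y(1), of "z - t *\<^sub>C v"] by simp
      also have "dist (t *\<^sub>C v) (t *\<^sub>C v - z) = norm z" by (simp add: dist_norm)
      finally show ?thesis by simp
    qed
    have phi0: "\<phi> 0 \<le> norm z"
      unfolding \<phi>_def using infdist_le[OF csub_zero[OF Y(1)], of z] by simp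
    define R where "R = (2 * norm z + 1) / r"
    obtain t0 where t0: "t0 \<in> cball 0 R" "\<And>t. t \<in> cball 0 R \<Longrightarrow> \<phi> t0 \<le> \<phi> t"
      using continuous_attains_inf[of "cball (0::complex) R" \<phi>] cont
      by (metis compact_cball continuous_on_subset cball_eq_empty empty_iff subset_UNIV
          r r_def R_def divide_nonneg_pos norm_ge_zero add_nonneg_nonneg mult_nonneg_nonneg
          zero_le_one zero_le_numeral linorder_not_less)
    have Rnn: "R \<ge> 0" unfolding R_def using r r_def by simp
    have tmin: "\<phi> t0 \<le> \<phi> t" for t
    proof (cases "t \<in> cball 0 R")
      case True then show ?thesis by (rule t0(2))
    next
      case False
      then have "cmod t > R" by (simp add: dist_norm)
      then have "cmod t * r > R * r" using r r_def by simp
      also have "R * r = 2 * norm z + 1" unfolding R_def using r r_def by simp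
      finally have "\<phi> t > norm z" using lower[of t] by linarith
      moreover have "\<phi> t0 \<le> \<phi> 0" using t0(2)[of 0] Rnn by simp
      ultimately show ?thesis using phi0 by linarith
    qed
    have "z - t0 *\<^sub>C v \<notin> Y"
    proof
      assume "z - t0 *\<^sub>C v \<in> Y"
      then have "(z - t0 *\<^sub>C v) + t0 *\<^sub>C v \<in> ?S" by blast
      then show False using zS by simp
    qed
    then have m0: "\<phi> t0 > 0" unfolding \<phi>_def by (rule infdist_pos_not_in_closed[OF Y(2) ne])
    obtain s where s: "s \<in> ?S" "dist s z < \<phi> t0"
      using z m0 unfolding closure_approachable by blast
    then obtain y t where yt: "y \<in> Y" "s = y + t *\<^sub>C v" by blast
    have "\<phi> t \<le> dist (z - t *\<^sub>C v) y" unfolding \<phi>_def by (rule infdist_le[OF yt(1)])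
    also have "\<dots> = dist s z" using yt(2) by (simp add: dist_norm norm_minus_commute algebra_simps)
    finally show False using s(2) tmin[of t] by linarith
  qed
  then have "closure ?S \<subseteq> ?S" by blast
  then show ?thesis by (simp add: closure_subset_eq)
qed

fun Ysp :: "'a::complex_normed_vector set \<Rightarrow> (nat \<Rightarrow> 'a) \<Rightarrow> nat \<Rightarrow> 'a set" where
  "Ysp W0 f 0 = W0"
| "Ysp W0 f (Suc k) = {y + t *\<^sub>C f k | y t. y \<in> Ysp W0 f k}"

lemma Ysp_csub: "csubspace W0 \<Longrightarrow> csubspace (Ysp W0 f k)"
proof (induction k)
  case 0 then show ?case by simp
next
  case (Suc k)
  have IH: "csubspace (Ysp W0 f k)" using Suc by simp
  show ?case unfolding csubspace_def Ysp.simps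
  proof (intro conjI ballI allI)
    show "0 \<in> {y + t *\<^sub>C f k |y t. y \<in> Ysp W0 f k}"
      using csub_zero[OF IH] by (auto intro!: exI[of _ 0])
  next
    fix x y assume "x \<in> {y + t *\<^sub>C f k |y t. y \<in> Ysp W0 f k}" "y \<in> {y + t *\<^sub>C f k |y t. y \<in> Ysp W0 f k}"
    then obtain y1 t1 y2 t2 where "x = y1 + t1 *\<^sub>C f k" "y = y2 + t2 *\<^sub>C f k" "y1 \<in> Ysp W0 f k" "y2 \<in> Ysp W0 f k"
      by blast
    then show "x + y \<in> {y + t *\<^sub>C f k |y t. y \<in> Ysp W0 f k}"
      using csub_add[OF IH]
      by (auto intro!: exI[of _ "y1 + y2"] exI[of _ "t1 + t2"] simp: scaleC_add_left algebra_simps)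
  next
    fix a x assume "x \<in> {y + t *\<^sub>C f k |y t. y \<in> Ysp W0 f k}"
    then obtain y1 t1 where "x = y1 + t1 *\<^sub>C f k" "y1 \<in> Ysp W0 f k" by blast
    then show "a *\<^sub>C x \<in> {y + t *\<^sub>C f k |y t. y \<in> Ysp W0 f k}"
      using csub_scale[OF IH]
      by (auto intro!: exI[of _ "a *\<^sub>C y1"] exI[of _ "a * t1"] simp: scaleC_add_right scaleC_scaleC)
  qed
qed

lemma Ysp_step_sub: "Ysp W0 f k \<subseteq> Ysp W0 f (Suc k)"
proof
  fix x assume "x \<in> Ysp W0 f k"
  moreover have "x = x + 0 *\<^sub>C f k" by (simp add: cv.scale_zero_left)
  ultimately show "x \<in> Ysp W0 f (Suc k)" by (simp only: Ysp.simps) blast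
qed

lemma Ysp_W0: "W0 \<subseteq> Ysp W0 f k"
proof (induction k)
  case 0 then show ?case by simp
next
  case (Suc k) then show ?case using Ysp_step_sub[of W0 f k] by blast
qed

lemma Ysp_lincomb: "csubspace W0 \<Longrightarrow> (\<Sum>i<k. c i *\<^sub>C f i) \<in> Ysp W0 f k"
proof (induction k)
  case 0 then show ?case by (simp add: csub_zero)
next
  case (Suc k) then show ?case by auto
qed

lemma Ysp_char: "x \<in> Ysp W0 f k \<Longrightarrow> \<exists>w\<in>W0. \<exists>a. x = w + (\<Sum>i<k. a i *\<^sub>C f i)"
proof (induction k arbitrary: x)
  case 0 then show ?case by auto
next
  case (Suc k)
  then obtain y t where yt: "x = y + t *\<^sub>C f k" "y \<in> Ysp W0 f k" by auto
  then obtain w a where wa: "w \<in> W0" "y = w + (\<Sum>i<k. a i *\<^sub>C f i)" using Suc.IH by blast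
  have "(\<Sum>i<Suc k. (a(k := t)) i *\<^sub>C f i) = (\<Sum>i<k. a i *\<^sub>C f i) + t *\<^sub>C f k"
    by simp
  then show ?case using yt wa by (auto intro!: bexI[of _ w] exI[of _ "a(k := t)"] simp: add.assoc)
qed

lemma Ysp_sub: "csubspace E \<Longrightarrow> W0 \<subseteq> E \<Longrightarrow> (\<And>i. i < k \<Longrightarrow> f i \<in> E) \<Longrightarrow> Ysp W0 f k \<subseteq> E"
proof (induction k)
  case 0 then show ?case by simp
next
  case (Suc k)
  then have "Ysp W0 f k \<subseteq> E" "f k \<in> E" by auto
  then show ?case using Suc.prems(1) by (auto intro!: csub_add csub_scale)
qed

lemma Ysp_cong: "(\<And>j. j < i \<Longrightarrow> f j = g j) \<Longrightarrow> Ysp W0 f i = Ysp W0 g i"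
  by (induction i) auto

lemma indep_not_in_Ysp:
  assumes ind: "cindep_mod e m W0" and k: "k < m"
  shows "e k \<notin> Ysp W0 e k"
proof
  assume "e k \<in> Ysp W0 e k"
  then obtain w a where wa: "w \<in> W0" "e k = w + (\<Sum>i<k. a i *\<^sub>C e i)" using Ysp_char by blast
  define c where "c i = (if i < k then - a i else if i = k then 1 else 0)" for i
  have "(\<Sum>i<m. c i *\<^sub>C e i) = (\<Sum>i<Suc k. c i *\<^sub>C e i)"
    using k by (intro sum.mono_neutral_right) (auto simp: c_def cv.scale_zero_left)
  also have "\<dots> = (\<Sum>i<k. (- a i) *\<^sub>C e i) + e k"
    by (simp add: c_def scaleC_one)
  also have "(\<Sum>i<k. (- a i) *\<^sub>C e i) = - (\<Sum>i<k. a i *\<^sub>C e i)"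
    by (simp add: cv.scale_minus_left sum_negf)
  finally have "(\<Sum>i<m. c i *\<^sub>C e i) = w" using wa(2) by (simp add: algebra_simps)
  then have "\<forall>i<m. c i = 0" using ind wa(1) unfolding cindep_mod_def by metis
  then have "c k = 0" using k by blast
  then show False by (simp add: c_def)
qed

lemma riesz_step:
  assumes Y: "csubspace Y" "closed Y" and e: "e \<notin> Y" and th: "0 < \<theta>" "\<theta> < 1"
  shows "\<exists>y\<in>Y. \<theta> * norm (e - y) \<le> infdist (e - y) Y \<and> e - y \<noteq> 0"
proof -
  have ne: "Y \<noteq> {}" using csub_zero[OF Y(1)] by auto
  have r: "infdist e Y > 0" by (rule infdist_pos_not_in_closed[OF Y(2) ne e])
  have "infdist e Y < infdist e Y / \<theta>" using r th by (simp add: divide_simps)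
  then obtain y where y: "y \<in> Y" "dist e y < infdist e Y / \<theta>" using infdist_less_ex[OF ne] by blast
  have eq: "infdist (e - y) Y = infdist e Y"
    using infdist_translate[OF Y(1) csub_neg[OF Y(1) y(1)], of e] by simp
  have "\<theta> * norm (e - y) < infdist e Y" using y(2) th by (simp add: dist_norm divide_simps mult.commute)
  moreover have "e - y \<noteq> 0" using e y(1) by auto
  ultimately show ?thesis using y(1) eq by (intro bexI[of _ y]) auto
qed

lemma basis_construct:
  assumes W0: "csubspace W0" "closed W0" and E: "csubspace E" "W0 \<subseteq> E"
    and e: "\<And>i. i < m \<Longrightarrow> e i \<in> E" and ind: "cindep_mod e m W0" and th: "0 < \<theta>" "\<theta> < 1"
  shows "k \<le> m \<Longrightarrow> \<exists>f. (\<forall>i<k. f i \<in> E \<and> f i \<noteq> 0 \<and> \<theta> * norm (f i) \<le> infdist (f i) (Ysp W0 f i))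
     \<and> Ysp W0 f k \<subseteq> Ysp W0 e k \<and> closed (Ysp W0 f k)"
proof (induction k)
  case 0 then show ?case using W0 by simp
next
  case (Suc k)
  then obtain f where f: "\<forall>i<k. f i \<in> E \<and> f i \<noteq> 0 \<and> \<theta> * norm (f i) \<le> infdist (f i) (Ysp W0 f i)"
     "Ysp W0 f k \<subseteq> Ysp W0 e k" "closed (Ysp W0 f k)" by auto
  have k: "k < m" using Suc.prems by simp
  have Ycs: "csubspace (Ysp W0 f k)" by (rule Ysp_csub[OF W0(1)])
  have "e k \<notin> Ysp W0 f k" using f(2) indep_not_in_Ysp[OF ind k] by blast
  then obtain y where y: "y \<in> Ysp W0 f k" "\<theta> * norm (e k - y) \<le> infdist (e k - y) (Ysp W0 f k)"
      "e k - y \<noteq> 0"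
    using riesz_step[OF Ycs f(3) _ th] by blast
  define g where "g = f(k := e k - y)"
  have Yeq: "Ysp W0 g i = Ysp W0 f i" if "i \<le> k" for i
    using that by (intro Ysp_cong) (simp add: g_def)
  have YE: "Ysp W0 f k \<subseteq> E" using Ysp_sub[OF E, where k=k and f=f] f(1) by auto
  have gk: "g k \<in> E" using e[OF k] YE y(1) E(1) by (simp add: g_def csub_diff subset_iff)
  have P1: "\<forall>i<Suc k. g i \<in> E \<and> g i \<noteq> 0 \<and> \<theta> * norm (g i) \<le> infdist (g i) (Ysp W0 g i)"
  proof (intro allI impI)
    fix i assume i: "i < Suc k"
    show "g i \<in> E \<and> g i \<noteq> 0 \<and> \<theta> * norm (g i) \<le> infdist (g i) (Ysp W0 g i)"
    proof (cases "i = k")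
      case True then show ?thesis using gk y Yeq[of k] by (simp add: g_def)
    next
      case False then show ?thesis using f(1) i Yeq[of i] by (simp add: g_def)
    qed
  qed
  have ecs: "csubspace (Ysp W0 e k)" by (rule Ysp_csub[OF W0(1)])
  have P2: "Ysp W0 g (Suc k) \<subseteq> Ysp W0 e (Suc k)"
  proof
    fix x assume "x \<in> Ysp W0 g (Suc k)"
    then obtain y' t where yt: "x = y' + t *\<^sub>C g k" "y' \<in> Ysp W0 f k" using Yeq[of k] by auto
    have "x = (y' - t *\<^sub>C y) + t *\<^sub>C e k" using yt(1)
      by (simp add: g_def cv.scale_right_diff_distrib algebra_simps)
    moreover have "y' - t *\<^sub>C y \<in> Ysp W0 e k"
      using yt(2) y(1) f(2) by (intro csub_diff[OF ecs] csub_scale[OF ecs]) auto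
    ultimately show "x \<in> Ysp W0 e (Suc k)" by auto
  qed
  have "g k \<notin> Ysp W0 f k"
  proof
    assume "g k \<in> Ysp W0 f k"
    then have "infdist (g k) (Ysp W0 f k) = 0" by simp
    moreover have "\<theta> * norm (g k) > 0" using th y(3) by (simp add: g_def)
    ultimately show False using y(2) by (simp add: g_def)
  qed
  then have P3: "closed (Ysp W0 g (Suc k))"
    using closed_add_line[OF Ycs f(3), of "g k"] Yeq[of k] by simp
  show ?case using P1 P2 P3 by blast
qed

lemma coeff_bound:
  assumes W0: "csubspace W0"
    and f: "\<And>i. i < m \<Longrightarrow> \<theta> * norm (f i) \<le> infdist (f i) (Ysp W0 f i)" and th: "0 < \<theta>"
  shows "k \<le> m \<Longrightarrow> (\<Sum>i<k. cmod (c i) * norm (f i)) \<le> ((1 + 1/\<theta>)^k - 1) * infdist (\<Sum>i<k. c i *\<^sub>C f i) W0"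
proof (induction k)
  case 0 then show ?case by simp
next
  case (Suc k)
  have k: "k < m" using Suc.prems by simp
  define x where "x = (\<Sum>i<k. c i *\<^sub>C f i)"
  define D where "D = infdist (x + c k *\<^sub>C f k) W0"
  define P where "P = cmod (c k) * norm (f k)"
  define B where "B = (1 + 1/\<theta>)^k"
  have B1: "B \<ge> 1" unfolding B_def using th by (simp add: one_le_power)
  have IH: "(\<Sum>i<k. cmod (c i) * norm (f i)) \<le> (B - 1) * infdist x W0"
    using Suc k unfolding x_def B_def by simp
  have Ycs: "csubspace (Ysp W0 f k)" by (rule Ysp_csub[OF W0])
  have ne: "W0 \<noteq> {}" using csub_zero[OF W0] by auto
  have "infdist (x + c k *\<^sub>C f k) (Ysp W0 f k) \<le> D"
    unfolding D_def by (rule infdist_mono[OF Ysp_W0 ne])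
  moreover have "infdist (x + c k *\<^sub>C f k) (Ysp W0 f k) = infdist (c k *\<^sub>C f k) (Ysp W0 f k)"
    using infdist_translate[OF Ycs Ysp_lincomb[OF W0, where k=k and c=c and f=f], of "c k *\<^sub>C f k"]
    unfolding x_def by (simp add: add.commute)
  moreover have "\<theta> * P \<le> infdist (c k *\<^sub>C f k) (Ysp W0 f k)"
  proof (cases "c k = 0")
    case True then show ?thesis by (simp add: P_def infdist_nonneg)
  next
    case False
    have "\<theta> * P = cmod (c k) * (\<theta> * norm (f k))" by (simp add: P_def)
    also have "\<dots> \<le> cmod (c k) * infdist (f k) (Ysp W0 f k)" using f[OF k] by (simp add: mult_left_mono)
    also have "\<dots> = infdist (c k *\<^sub>C f k) (Ysp W0 f k)" using infdist_scale[OF Ycs False] by simp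
    finally show ?thesis .
  qed
  ultimately have PD: "\<theta> * P \<le> D" by linarith
  then have PD': "P \<le> D / \<theta>" using th by (simp add: divide_simps mult.commute)
  have "infdist x W0 \<le> infdist (x + c k *\<^sub>C f k) W0 + dist x (x + c k *\<^sub>C f k)" by (rule infdist_triangle)
  also have "dist x (x + c k *\<^sub>C f k) = P" by (simp add: dist_norm P_def norm_scaleC)
  finally have xD: "infdist x W0 \<le> D + P" unfolding D_def .
  have "(\<Sum>i<Suc k. cmod (c i) * norm (f i)) = (\<Sum>i<k. cmod (c i) * norm (f i)) + P"
    by (simp add: P_def)
  also have "\<dots> \<le> (B - 1) * (D + P) + P" using IH xD B1 by (meson add_right_mono mult_left_mono diff_ge_0_iff_ge order_trans)
  also have "\<dots> = (B - 1) * D + B * P" by (simp add: algebra_simps)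
  also have "\<dots> \<le> (B - 1) * D + B * (D / \<theta>)" using mult_left_mono[OF PD', of B] B1 by simp
  also have "\<dots> = ((1 + 1/\<theta>)^Suc k - 1) * D" unfolding B_def by (simp add: algebra_simps)
  finally show ?case unfolding D_def x_def by simp
qed

lemma sum_split_add: "(\<Sum>i<k1 + (k2::nat). g i) = (\<Sum>i<k1. g i) + (\<Sum>j<k2. g (k1 + j))"
  by (induction k2) (simp_all add: add.assoc)

lemma bsp_csub: "bounded_symmetric_pair Q V \<Longrightarrow> csubspace V"
  by (simp add: bounded_symmetric_pair_def closed_csubspace_def)
lemma bsp_closed: "bounded_symmetric_pair Q V \<Longrightarrow> closed V"
  by (simp add: bounded_symmetric_pair_def closed_csubspace_def)

lemma form_add: "bounded_symmetric_pair Q V \<Longrightarrow> x \<in> V \<Longrightarrow> y \<in> V \<Longrightarrow> z \<in> V \<Longrightarrow> Q (x + y) z = Q x z + Q y z"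
  unfolding bounded_symmetric_pair_def hermitian_sesq_def by blast
lemma form_scale: "bounded_symmetric_pair Q V \<Longrightarrow> x \<in> V \<Longrightarrow> z \<in> V \<Longrightarrow> Q (a *\<^sub>C x) z = a * Q x z"
  unfolding bounded_symmetric_pair_def hermitian_sesq_def by blast
lemma form_herm: "bounded_symmetric_pair Q V \<Longrightarrow> x \<in> V \<Longrightarrow> y \<in> V \<Longrightarrow> Q y x = cnj (Q x y)"
  unfolding bounded_symmetric_pair_def hermitian_sesq_def by blast

lemma form_zero: assumes "bounded_symmetric_pair Q V" "z \<in> V" shows "Q 0 z = 0"
proof -
  have "Q (0 *\<^sub>C 0) z = 0 * Q 0 z"
    by (rule form_scale[OF assms(1) csub_zero[OF bsp_csub[OF assms(1)]] assms(2)])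
  then show ?thesis by (simp only: cv.scale_zero_left mult_zero_left)
qed

lemma radical_csub: assumes QV: "bounded_symmetric_pair Q V" shows "csubspace (radical Q V)"
proof -
  note V = bsp_csub[OF QV]
  show ?thesis unfolding csubspace_def
  proof (intro conjI ballI allI)
    show "0 \<in> radical Q V" unfolding radical_def using form_zero[OF QV] csub_zero[OF V] by blast
  next
    fix x y assume x: "x \<in> radical Q V" and y: "y \<in> radical Q V"
    then have xV: "x \<in> V" and yV: "y \<in> V" by (auto simp: radical_def)
    have "Q (x + y) v = 0" if v: "v \<in> V" for v
      using form_add[OF QV xV yV v] x y v by (simp add: radical_def)
    then show "x + y \<in> radical Q V" unfolding radical_def using csub_add[OF V xV yV] by blast
  next
    fix a x assume x: "x \<in> radical Q V"
    then have xV: "x \<in> V" by (auto simp: radical_def)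
    have "Q (a *\<^sub>C x) v = 0" if v: "v \<in> V" for v
      using form_scale[OF QV xV v] x v by (simp add: radical_def)
    then show "a *\<^sub>C x \<in> radical Q V" unfolding radical_def using csub_scale[OF V xV] by blast
  qed
qed

lemma radical_sub: "radical Q V \<subseteq> V" by (auto simp: radical_def)

lemma form_rad:
  assumes RW: "bounded_symmetric_pair R W" and a: "a \<in> W" and b: "b \<in> radical R W"
  shows "R (a + b) (a + b) = R a a"
proof -
  note W = bsp_csub[OF RW]
  have bW: "b \<in> W" using b by (auto simp: radical_def)
  have abW: "a + b \<in> W" by (rule csub_add[OF W a bW])
  have "R (a + b) (a + b) = R a (a + b) + R b (a + b)" by (rule form_add[OF RW a bW abW])
  also have "R b (a + b) = 0" using b abW by (auto simp: radical_def)
  also have "R a (a + b) = cnj (R (a + b) a)" by (rule form_herm[OF RW abW a])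
  also have "R (a + b) a = R a a + R b a" by (rule form_add[OF RW a bW a])
  also have "R b a = 0" using b a by (auto simp: radical_def)
  also have "cnj (R a a + 0) = R a a" using form_herm[OF RW a a] by simp
  finally show ?thesis by simp
qed

lemma delta_c_bound:
  assumes QV: "bounded_symmetric_pair Q V" and RW: "bounded_symmetric_pair R W" and c: "c \<ge> 0"
  shows "delta_c c Q V R W \<ge> 0"
    and "\<And>x y u v. x \<in> V \<Longrightarrow> y \<in> V \<Longrightarrow> u \<in> W \<Longrightarrow> v \<in> W \<Longrightarrow>
      cmod (Q x y - R u v) \<le> delta_c c Q V R W * (norm u + norm x) * (norm v + norm y)
        + c * ((norm u + norm x) * norm (v - y) + norm (u - x) * (norm v + norm y))"
proof -
  define S where "S = {d. d \<ge> 0 \<and> (\<forall>x\<in>V. \<forall>y\<in>V. \<forall>u\<in>W. \<forall>v\<in>W.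
      cmod (Q x y - R u v) \<le> d * (norm u + norm x) * (norm v + norm y)
        + c * ((norm u + norm x) * norm (v - y) + norm (u - x) * (norm v + norm y)))}"
  have dc: "delta_c c Q V R W = Inf S" unfolding S_def delta_c_def by simp
  obtain MQ where MQ: "\<forall>x\<in>V. \<forall>y\<in>V. cmod (Q x y) \<le> MQ * norm x * norm y"
    using QV by (auto simp: bounded_symmetric_pair_def)
  obtain MR where MR: "\<forall>x\<in>W. \<forall>y\<in>W. cmod (R x y) \<le> MR * norm x * norm y"
    using RW by (auto simp: bounded_symmetric_pair_def)
  define d0 where "d0 = \<bar>MQ\<bar> + \<bar>MR\<bar>"
  have "d0 \<in> S"
    unfolding S_def
  proof (intro CollectI conjI ballI)
    show "0 \<le> d0" by (simp add: d0_def)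
    fix x y u v assume xy: "x \<in> V" "y \<in> V" and uv: "u \<in> W" "v \<in> W"
    have c0: "0 \<le> c * ((norm u + norm x) * norm (v - y) + norm (u - x) * (norm v + norm y))"
      using c by simp
    have p1: "norm x * norm y \<le> (norm u + norm x) * (norm v + norm y)"
      by (intro mult_mono) auto
    have p2: "norm u * norm v \<le> (norm u + norm x) * (norm v + norm y)"
      by (intro mult_mono) auto
    have "cmod (Q x y - R u v) \<le> cmod (Q x y) + cmod (R u v)" by (rule norm_triangle_ineq4)
    also have "\<dots> \<le> \<bar>MQ\<bar> * (norm x * norm y) + \<bar>MR\<bar> * (norm u * norm v)"
    proof -
      have "cmod (Q x y) \<le> \<bar>MQ\<bar> * (norm x * norm y)"
      proof -
        have "cmod (Q x y) \<le> MQ * (norm x * norm y)" using MQ xy by (simp add: mult.assoc)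
        also have "\<dots> \<le> \<bar>MQ\<bar> * (norm x * norm y)" by (intro mult_right_mono) auto
        finally show ?thesis .
      qed
      moreover have "cmod (R u v) \<le> \<bar>MR\<bar> * (norm u * norm v)"
      proof -
        have "cmod (R u v) \<le> MR * (norm u * norm v)" using MR uv by (simp add: mult.assoc)
        also have "\<dots> \<le> \<bar>MR\<bar> * (norm u * norm v)" by (intro mult_right_mono) auto
        finally show ?thesis .
      qed
      ultimately show ?thesis by simp
    qed
    also have "\<dots> \<le> \<bar>MQ\<bar> * ((norm u + norm x) * (norm v + norm y)) + \<bar>MR\<bar> * ((norm u + norm x) * (norm v + norm y))"
      using p1 p2 by (intro add_mono mult_left_mono) auto
    also have "\<dots> = d0 * (norm u + norm x) * (norm v + norm y)" by (simp add: d0_def algebra_simps)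
    finally show "cmod (Q x y - R u v) \<le> d0 * (norm u + norm x) * (norm v + norm y)
        + c * ((norm u + norm x) * norm (v - y) + norm (u - x) * (norm v + norm y))" using c0 by linarith
  qed
  then have ne: "S \<noteq> {}" by auto
  have bdd: "bdd_below S" unfolding S_def by (rule bdd_belowI[of _ 0]) auto
  show "delta_c c Q V R W \<ge> 0" unfolding dc using ne by (intro cInf_greatest) (auto simp: S_def)
  fix x y u v assume xy: "x \<in> V" "y \<in> V" and uv: "u \<in> W" "v \<in> W"
  define P where "P = (norm u + norm x) * (norm v + norm y)"
  define C where "C = c * ((norm u + norm x) * norm (v - y) + norm (u - x) * (norm v + norm y))"
  have P0: "P \<ge> 0" unfolding P_def by simp
  have "cmod (Q x y - R u v) \<le> Inf S * P + C"
  proof (rule field_le_epsilon)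
    fix e :: real assume e: "0 < e"
    have "Inf S < Inf S + e / (P + 1)" using e P0 by simp
    then obtain d where d: "d \<in> S" "d < Inf S + e / (P + 1)" using cInf_lessD[OF ne] by blast
    have "cmod (Q x y - R u v) \<le> d * P + C"
      using d(1) xy uv unfolding S_def P_def C_def by (auto simp: mult.assoc)
    also have "d * P \<le> (Inf S + e / (P + 1)) * P" using d(2) P0 by (simp add: mult_right_mono)
    also have "(Inf S + e / (P + 1)) * P = Inf S * P + e * (P / (P + 1))" by (simp add: algebra_simps)
    also have "e * (P / (P + 1)) \<le> e * 1" using P0 e by (intro mult_left_mono) auto
    finally show "cmod (Q x y - R u v) \<le> Inf S * P + C + e" by simp
  qed
  then show "cmod (Q x y - R u v) \<le> delta_c c Q V R W * (norm u + norm x) * (norm v + norm y)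
        + c * ((norm u + norm x) * norm (v - y) + norm (u - x) * (norm v + norm y))"
    unfolding dc P_def C_def by (simp add: mult.assoc)
qed

lemma enat_sup_sum:
  assumes "P 0" "Q 0" "\<And>a b. P a \<Longrightarrow> Q b \<Longrightarrow> a + b \<le> n"
  shows "Sup {enat k | k. P k} + Sup {enat k | k. Q k} \<le> enat n"
proof -
  have fin: "finite {enat k | k. P k}" "finite {enat k | k. Q k}"
  proof -
    have "{enat k | k. P k} \<subseteq> enat ` {..n}" using assms(2,3) by force
    then show "finite {enat k | k. P k}" by (rule finite_subset) simp
    have "{enat k | k. Q k} \<subseteq> enat ` {..n}" using assms(1,3) by force
    then show "finite {enat k | k. Q k}" by (rule finite_subset) simp
  qed
  have ne: "{enat k | k. P k} \<noteq> {}" "{enat k | k. Q k} \<noteq> {}" using assms(1,2) by auto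
  have "Sup {enat k | k. P k} \<in> {enat k | k. P k}"
    using cSup_eq_Max[OF fin(1) ne(1)] Max_in[OF fin(1) ne(1)] by simp
  then obtain a where a: "P a" "Sup {enat k | k. P k} = enat a" by auto
  have "Sup {enat k | k. Q k} \<in> {enat k | k. Q k}"
    using cSup_eq_Max[OF fin(2) ne(2)] Max_in[OF fin(2) ne(2)] by simp
  then obtain b where b: "Q b" "Sup {enat k | k. Q k} = enat b" by auto
  show ?thesis using a b assms(3)[OF a(1) b(1)] by simp
qed

lemma cindep_trunc: "cindep_mod u k B \<Longrightarrow> j \<le> k \<Longrightarrow> cindep_mod u j B"
  unfolding cindep_mod_def
proof (intro allI impI)
  fix c i assume ind: "\<forall>c. (\<Sum>i<k. c i *\<^sub>C u i) \<in> B \<longrightarrow> (\<forall>i<k. c i = 0)" and jk: "j \<le> k"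
    and s: "(\<Sum>i<j. c i *\<^sub>C u i) \<in> B" and i: "i < j"
  define c' where "c' i = (if i < j then c i else 0)" for i
  have "(\<Sum>i<k. c' i *\<^sub>C u i) = (\<Sum>i<j. c' i *\<^sub>C u i)"
    using jk by (intro sum.mono_neutral_right) (auto simp: c'_def cv.scale_zero_left)
  also have "\<dots> = (\<Sum>i<j. c i *\<^sub>C u i)" by (simp add: c'_def)
  finally have "\<forall>i<k. c' i = 0" using ind s by metis
  then have "c' i = 0" using i jk by simp
  then show "c i = 0" using i by (simp add: c'_def)
qed

lemma choose_params:
  fixes g g0 S N :: real
  assumes g: "0 \<le> g" and g0: "0 \<le> g0" and S: "0 \<le> S" and N: "N = 2^(n+1) * (n+1)"
    and key: "S + g + g0 + S*g0 < 1/N" and gN: "g < 1/N" and g0N: "g0 < 1/N"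
  shows "\<exists>\<theta> \<eta>. 0 < \<theta> \<and> \<theta> < 1 \<and> g + S < \<eta> \<and> ((1 + 1/\<theta>)^(n+1) - 1) * (\<eta> + g0 + \<eta>*g0) < 1"
proof -
  define P :: real where "P = 2^(n+1)"
  have P2: "P \<ge> 2" unfolding P_def
    by (metis power_one_right power_increasing le_add2 one_le_numeral one_add_one add.commute)
  have NP: "N \<ge> P" unfolding N P_def by simp
  have Npos: "N > 0" using NP P2 by simp
  define F0 where "F0 = (g + S) + g0 + (g + S) * g0"
  have gg0: "g * g0 \<le> (1/N) * (1/N)" using gN g0N g g0 Npos by (intro mult_mono) auto
  have "F0 = (S + g + g0 + S*g0) + g * g0" unfolding F0_def by (simp add: algebra_simps)
  also have "\<dots> < 1/N + (1/N) * (1/N)" using key gg0 by linarith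
  also have "\<dots> = (N + 1) / N^2" using Npos by (simp add: field_simps power2_eq_square)
  finally have F0lt: "F0 < (N + 1) / N^2" .
  have F0nn: "F0 \<ge> 0" unfolding F0_def using g g0 S by simp
  have "(P - 1) * F0 < (P - 1) * ((N + 1) / N^2)" using F0lt P2 by (intro mult_strict_left_mono) auto
  also have "\<dots> \<le> (N - 1) * ((N + 1) / N^2)" using NP Npos by (intro mult_right_mono) auto
  also have "\<dots> = (N^2 - 1) / N^2" by (simp add: field_simps power2_eq_square)
  also have "\<dots> < 1" using Npos by (simp add: divide_simps)
  finally have lt1: "(P - 1) * F0 < 1" .
  have lim: "((\<lambda>\<theta>::real. ((1 + 1/\<theta>)^(n+1) - 1) * F0) \<longlongrightarrow> ((1 + 1/1)^(n+1) - 1) * F0) (at_left 1)"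
    by (intro tendsto_intros) auto
  have "((1 + 1/(1::real))^(n+1) - 1) * F0 < 1" using lt1 by (simp add: P_def)
  from order_tendstoD(2)[OF lim this]
  obtain b where b: "b < 1" "\<And>y. y > b \<Longrightarrow> y < 1 \<Longrightarrow> ((1 + 1/y)^(n+1) - 1) * F0 < 1"
    unfolding eventually_at_left_field by blast
  define \<theta> where "\<theta> = (max b 0 + 1) / 2"
  have th: "0 < \<theta>" "\<theta> < 1" "\<theta> > b" unfolding \<theta>_def using b(1) by auto
  define K where "K = (1 + 1/\<theta>)^(n+1) - 1"
  have KF: "K * F0 < 1" unfolding K_def using b(2) th by simp
  have "1 + 1/\<theta> \<ge> 1" using th by simp
  have "(1 + 1/\<theta>)^(n+1) \<ge> (1 + 1/\<theta>)^1"
    using th by (intro power_increasing) auto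
  moreover have "1/\<theta> > 0" using th by simp
  ultimately have Kpos: "K > 0" unfolding K_def by (simp only: power_one_right)
  define \<epsilon> where "\<epsilon> = (1 - K * F0) / (2 * K * (1 + g0))"
  have eps: "\<epsilon> > 0" unfolding \<epsilon>_def using KF Kpos g0 by simp
  define \<eta> where "\<eta> = (g + S) + \<epsilon>"
  have e1: "K * (\<eta> + g0 + \<eta> * g0) = K * F0 + K * \<epsilon> * (1 + g0)"
    unfolding \<eta>_def F0_def by (simp add: algebra_simps)
  have nz: "2 * K * (1 + g0) \<noteq> 0" using Kpos g0 by simp
  have e2: "K * \<epsilon> * (1 + g0) = (1 - K * F0) / 2"
  proof -
    have "K * \<epsilon> * (1 + g0) = (1 - K * F0) * (K * (1 + g0)) / (2 * K * (1 + g0))"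
      unfolding \<epsilon>_def by (simp add: algebra_simps)
    also have "\<dots> = (1 - K * F0) / 2" using nz by (simp add: field_simps)
    finally show ?thesis .
  qed
  have "K * (\<eta> + g0 + \<eta> * g0) < 1" unfolding e1 e2 using KF by (simp add: field_simps)
  then have "0 < \<theta> \<and> \<theta> < 1 \<and> g + S < \<eta> \<and> ((1 + 1/\<theta>)^(n+1) - 1) * (\<eta> + g0 + \<eta>*g0) < 1"
    using th eps unfolding K_def \<eta>_def by simp
  then show ?thesis by blast
qed

lemma gamma_d_nonneg:
  assumes "gamma_form Q V > 0"
  shows "real_of_ereal (inverse (gamma_form Q V)) \<ge> 0"
  using assms by (cases "gamma_form Q V") auto

lemma unit_close:
  fixes Q R :: "'a::complex_normed_vector \<Rightarrow> 'a \<Rightarrow> complex"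
  assumes QV: "bounded_symmetric_pair Q V" and RW: "bounded_symmetric_pair R W"
    and h: "h \<in> {1, -1}" and c: "c \<ge> 0"
    and psd: "\<forall>x\<in>V. Re (h * Q x x) \<ge> 0"
    and gpos: "gamma_form Q V > 0"
    and E: "E \<subseteq> W" "\<forall>x\<in>E. Re (h * R x x) \<le> 0"
    and dl: "2 * gap W V \<le> \<delta>"
    and S: "S = sqrt (real_of_ereal (inverse (gamma_form Q V)) * (2 + \<delta>) *
          (2 * delta_c c Q V R W + (2 * delta_c c Q V R W + 2 * c) * \<delta>))"
    and eta: "gap W V + S < \<eta>"
    and x: "x \<in> E" "norm x = 1"
  shows "\<exists>y\<in>radical Q V. dist x y < \<eta>"
proof -
  define g where "g = gap W V"
  define d where "d = real_of_ereal (inverse (gamma_form Q V))"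
  define Dc where "Dc = delta_c c Q V R W"
  note Wc = bsp_csub[OF RW] and Vc = bsp_csub[OF QV]
  have g0: "g \<ge> 0" unfolding g_def by (rule gap_nonneg[OF Wc Vc])
  have d0: "d \<ge> 0" unfolding d_def by (rule gamma_d_nonneg[OF gpos])
  have Dc0: "Dc \<ge> 0" unfolding Dc_def by (rule delta_c_bound(1)[OF QV RW c])
  have dl0: "\<delta> \<ge> 0" using dl g0 unfolding g_def by simp
  have "0 \<le> d * (2 + \<delta>) * (2 * Dc + (2 * Dc + 2 * c) * \<delta>)"
    using d0 dl0 Dc0 c by (intro mult_nonneg_nonneg add_nonneg_nonneg) auto
  then have S0: "S \<ge> 0" unfolding S d_def Dc_def by simp
  have xW: "x \<in> W" using E x by auto
  have Vne: "V \<noteq> {}" using csub_zero[OF Vc] by auto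
  have hx: "infdist x V \<le> g" using gap_le[OF Wc Vc xW] x unfolding g_def by simp
  obtain x' where x': "x' \<in> V" "norm (x - x') \<le> 2 * g" "norm (x - x') < \<eta> - S"
  proof (cases "infdist x V = 0")
    case True
    then have "x \<in> V" using in_closed_iff_infdist_zero[OF bsp_closed[OF QV] Vne] by simp
    then show ?thesis using that[of x] g0 eta S0 unfolding g_def by simp
  next
    case False
    then have pos: "infdist x V > 0" using infdist_nonneg[of x V] by simp
    then have "g > 0" using hx by simp
    then have "infdist x V < min (2 * g) (\<eta> - S)" using hx eta unfolding g_def by simp
    then obtain x' where "x' \<in> V" "dist x x' < min (2 * g) (\<eta> - S)" using infdist_less_ex[OF Vne] by blast
    then show ?thesis using that[of x'] by (simp add: dist_norm)
  qed
  define \<tau> where "\<tau> = norm (x - x')"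
  have tau: "\<tau> \<le> \<delta>" "\<tau> \<ge> 0" using x'(2) dl unfolding \<tau>_def g_def by auto
  have nx': "norm x' \<le> 1 + \<tau>"
    using norm_triangle_ineq4[of x "x - x'"] x unfolding \<tau>_def by simp
  define q where "q = Q x' x'"
  define r where "r = R x x"
  have "cmod (q - r) \<le> Dc * (norm x + norm x') * (norm x + norm x')
        + c * ((norm x + norm x') * norm (x - x') + norm (x - x') * (norm x + norm x'))"
    unfolding q_def r_def Dc_def by (rule delta_c_bound(2)[OF QV RW c x'(1) x'(1) xW xW])
  also have "\<dots> = Dc * ((1 + norm x') * (1 + norm x')) + c * (2 * ((1 + norm x') * \<tau>))"
    using x(2) unfolding \<tau>_def by (simp add: algebra_simps)
  also have "\<dots> \<le> Dc * ((2 + \<delta>) * (2 + \<delta>)) + c * (2 * ((2 + \<delta>) * \<delta>))"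
  proof -
    have a: "1 + norm x' \<le> 2 + \<delta>" using nx' tau by simp
    have "(1 + norm x') * (1 + norm x') \<le> (2 + \<delta>) * (2 + \<delta>)" using a dl0 by (intro mult_mono) auto
    moreover have "(1 + norm x') * \<tau> \<le> (2 + \<delta>) * \<delta>" using a tau by (intro mult_mono) auto
    ultimately show ?thesis using Dc0 c by (intro add_mono mult_left_mono) auto
  qed
  also have "\<dots> \<le> (2 + \<delta>) * (2 * Dc + (2 * Dc + 2 * c) * \<delta>)"
  proof -
    have "Dc * ((2 + \<delta>) * (2 + \<delta>)) + c * (2 * ((2 + \<delta>) * \<delta>)) = (2 + \<delta>) * (Dc * (2 + \<delta>) + 2 * c * \<delta>)"
      by (simp add: algebra_simps)
    also have "\<dots> \<le> (2 + \<delta>) * (2 * Dc + (2 * Dc + 2 * c) * \<delta>)"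
      using Dc0 dl0 by (intro mult_left_mono) (auto simp: algebra_simps)
    finally show ?thesis .
  qed
  finally have qr: "cmod (q - r) \<le> (2 + \<delta>) * (2 * Dc + (2 * Dc + 2 * c) * \<delta>)" .
  have Imq: "Im q = 0" using form_herm[OF QV x'(1) x'(1)] unfolding q_def
    by (metis cnj.simps(2) neg_equal_zero)
  have hq: "Re (h * q) \<ge> 0" using psd x'(1) unfolding q_def by blast
  have hr: "Re (h * r) \<le> 0" using E(2) x(1) unfolding r_def by blast
  have qle: "cmod q \<le> cmod (q - r)"
  proof -
    have "cmod q = \<bar>Re q\<bar>" by (rule cmod_eq_Re[OF Imq])
    also have "\<dots> \<le> \<bar>Re (q - r)\<bar>" using h hq hr by auto
    also have "\<dots> \<le> cmod (q - r)" by (rule abs_Re_le_cmod)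
    finally show ?thesis .
  qed
  define D where "D = infdist x' (radical Q V)"
  have D0: "D \<ge> 0" unfolding D_def by (rule infdist_nonneg)
  have "D\<^sup>2 \<le> d * ((2 + \<delta>) * (2 * Dc + (2 * Dc + 2 * c) * \<delta>))"
  proof (cases "D = 0")
    case True
    then show ?thesis using d0 dl0 Dc0 c by simp
  next
    case False
    then have Dpos: "D > 0" using D0 by simp
    have x'nr: "x' \<notin> radical Q V" using False unfolding D_def by auto
    have Vn0: "V \<noteq> {0}" using gpos by (auto simp: gamma_form_def)
    have "gamma_form Q V \<le> ereal (cmod (Q x' x') / (infdist x' (radical Q V))\<^sup>2)"
      unfolding gamma_form_def using Vn0 x'(1) x'nr by (auto intro!: INF_lower2)
    then have gle: "gamma_form Q V \<le> ereal (cmod q / D\<^sup>2)" unfolding q_def D_def .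
    then obtain \<gamma> where \<gamma>: "gamma_form Q V = ereal \<gamma>" "\<gamma> > 0" "\<gamma> \<le> cmod q / D\<^sup>2"
      using gpos by (cases "gamma_form Q V") auto
    have dg: "d = 1 / \<gamma>" unfolding d_def using \<gamma> by (simp add: inverse_eq_divide)
    have "\<gamma> * D\<^sup>2 \<le> cmod q" using \<gamma>(3) Dpos by (simp add: le_divide_eq)
    then have "D\<^sup>2 \<le> d * cmod q" using \<gamma>(2) unfolding dg by (simp add: field_simps)
    also have "\<dots> \<le> d * ((2 + \<delta>) * (2 * Dc + (2 * Dc + 2 * c) * \<delta>))"
      using qle qr d0 by (intro mult_left_mono) auto
    finally show ?thesis .
  qed
  then have DS: "D \<le> S" unfolding S d_def Dc_def by (intro real_le_rsqrt) (simp add: mult.assoc)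
  have "infdist x (radical Q V) \<le> D + dist x x'" unfolding D_def by (rule infdist_triangle)
  also have "\<dots> < \<eta>" using DS x'(3) by (simp add: dist_norm)
  finally show ?thesis using infdist_less_ex[of "radical Q V" x \<eta>] csub_zero[OF radical_csub[OF QV]] by blast
qed

lemma close_general:
  fixes Q R :: "'a::complex_normed_vector \<Rightarrow> 'a \<Rightarrow> complex"
  assumes QV: "bounded_symmetric_pair Q V" and RW: "bounded_symmetric_pair R W"
    and h: "h \<in> {1, -1}" and c: "c \<ge> 0"
    and psd: "\<forall>x\<in>V. Re (h * Q x x) \<ge> 0"
    and gpos: "gamma_form Q V > 0"
    and E: "csubspace E" "E \<subseteq> W" "\<forall>x\<in>E. Re (h * R x x) \<le> 0"
    and dl: "2 * gap W V \<le> \<delta>"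
    and S: "S = sqrt (real_of_ereal (inverse (gamma_form Q V)) * (2 + \<delta>) *
          (2 * delta_c c Q V R W + (2 * delta_c c Q V R W + 2 * c) * \<delta>))"
    and eta: "gap W V + S < \<eta>"
    and x: "x \<in> E"
  shows "\<exists>y\<in>radical Q V. norm (x - y) \<le> \<eta> * norm x"
proof (cases "x = 0")
  case True
  then show ?thesis using csub_zero[OF radical_csub[OF QV]] by (intro bexI[of _ 0]) auto
next
  case False
  let ?u = "complex_of_real (1 / norm x) *\<^sub>C x"
  note U = unit_in_csub[OF E(1) x False]
  obtain y' where y': "y' \<in> radical Q V" "dist ?u y' < \<eta>"
    using unit_close[OF QV RW h c psd gpos E(2,3) dl S eta U(1,2)] by blast
  define y where "y = complex_of_real (norm x) *\<^sub>C y'"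
  have yr: "y \<in> radical Q V" unfolding y_def by (rule csub_scale[OF radical_csub[OF QV] y'(1)])
  have "x - y = complex_of_real (norm x) *\<^sub>C (?u - y')"
    unfolding y_def using U(3) by (simp add: cv.scale_right_diff_distrib)
  then have "norm (x - y) = norm x * dist ?u y'" by (simp add: norm_scaleC dist_norm)
  also have "\<dots> \<le> norm x * \<eta>" using y'(2) by (intro mult_left_mono) auto
  also have "\<dots> = \<eta> * norm x" by simp
  finally show ?thesis using yr by blast
qed

lemma core:
  fixes Q R :: "'a::{complex_normed_vector, complete_space} \<Rightarrow> 'a \<Rightarrow> complex"
    and V W V0 W0 :: "'a set"
    and h :: complex and c :: real and n :: nat
  assumes QV: "bounded_symmetric_pair Q V"
    and RW: "bounded_symmetric_pair R W"
    and h: "h \<in> {1, -1}"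
    and c: "c \<ge> 0"
    and psd: "\<forall>x\<in>V. Re (h * Q x x) \<ge> 0"
    and gpos: "gamma_form Q V > 0"
    and V0: "closed_csubspace V0" "V0 \<subseteq> radical Q V"
    and W0: "closed_csubspace W0" "W0 \<subseteq> radical R W"
    and n: "qdim (radical Q V) V0 = enat n"
    and small: "gap W V + gap V0 W0 < 1 / (2 ^ (n + 1) * (n + 1))"
    and main: "let N = (2::real) ^ (n + 1) * (n + 1);
                   \<delta> = N * gap W V / (1 - N * gap W V);
                   d = real_of_ereal (inverse (gamma_form Q V));
                   e = 2 * delta_c c Q V R W;
                   f = 2 * delta_c c Q V R W + 2 * c
               in sqrt (d * (2 + \<delta>) * (e + f * \<delta>))
                  < (1 - N * (gap W V + gap V0 W0)) / (N * (1 + gap V0 W0))"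
    and E: "csubspace E" "E \<subseteq> W" "\<forall>x\<in>E. Re (h * R x x) \<le> 0" "W0 \<subseteq> E"
    and e: "\<And>i. i < n + 1 \<Longrightarrow> e i \<in> E" "cindep_mod e (n + 1) W0"
  shows False
proof -
  define m where "m = n + 1"
  define g where "g = gap W V"
  define g0 where "g0 = gap V0 W0"
  define N :: real where "N = (2::real) ^ (n + 1) * (n + 1)"
  have Neq: "N = (2::real) ^ (n + 1) * (real n + 1)" unfolding N_def by simp
  define Dc where "Dc = delta_c c Q V R W"
  define d where "d = real_of_ereal (inverse (gamma_form Q V))"
  have V0c: "csubspace V0" and W0c: "csubspace W0" and W0cl: "closed W0"
    using V0 W0 by (auto simp: closed_csubspace_def)
  note Wc = bsp_csub[OF RW] and Vc = bsp_csub[OF QV]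
  have gnn: "g \<ge> 0" unfolding g_def by (rule gap_nonneg[OF Wc Vc])
  have g0nn: "g0 \<ge> 0" unfolding g0_def by (rule gap_nonneg[OF V0c W0c])
  have d0: "d \<ge> 0" unfolding d_def by (rule gamma_d_nonneg[OF gpos])
  have Dc0: "Dc \<ge> 0" unfolding Dc_def by (rule delta_c_bound(1)[OF QV RW c])
  have N2: "N \<ge> 2"
  proof -
    have "(2::real) ^ 1 \<le> 2 ^ (n + 1)" by (intro power_increasing) auto
    moreover have "(1::real) \<le> real n + 1" by simp
    ultimately have "(2::real) * 1 \<le> 2 ^ (n + 1) * (real n + 1)" by (intro mult_mono) auto
    then show ?thesis unfolding Neq by simp
  qed
  have "N = 2 * 2 ^ n + 2 * 2 ^ n * real n" unfolding Neq by (simp add: algebra_simps)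
  then have sm: "g + g0 < 1 / N" using small unfolding g_def g0_def by simp
  have gN: "g < 1 / N" and g0N: "g0 < 1 / N" using sm gnn g0nn by auto
  have Ng: "N * g < 1" using gN N2 by (simp add: field_simps)
  define \<delta> where "\<delta> = N * g / (1 - N * g)"
  have Ng_le: "N * g \<le> \<delta>"
  proof -
    have "N * g * (1 - N * g) \<le> N * g" using N2 gnn Ng by (simp add: mult_left_le)
    then show ?thesis unfolding \<delta>_def using Ng by (simp add: le_divide_eq)
  qed
  have dl: "2 * gap W V \<le> \<delta>"
  proof -
    have "2 * g \<le> N * g" using N2 gnn by (simp add: mult_right_mono)
    then show ?thesis using Ng_le unfolding g_def by simp
  qed
  have dl0: "\<delta> \<ge> 0" using dl gnn unfolding g_def by simp
  define S where "S = sqrt (real_of_ereal (inverse (gamma_form Q V)) * (2 + \<delta>) *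
          (2 * delta_c c Q V R W + (2 * delta_c c Q V R W + 2 * c) * \<delta>))"
  have "0 \<le> d * (2 + \<delta>) * (2 * Dc + (2 * Dc + 2 * c) * \<delta>)"
    using d0 dl0 Dc0 c by (intro mult_nonneg_nonneg add_nonneg_nonneg) auto
  then have S0: "S \<ge> 0" unfolding S_def d_def Dc_def by simp
  have mainS: "S < (1 - N * (g + g0)) / (N * (1 + g0))"
    using main unfolding Let_def N_def[symmetric] g_def[symmetric] g0_def[symmetric]
      \<delta>_def[symmetric] S_def[symmetric] .
  have Npos: "N * (1 + g0) > 0" using N2 g0nn by simp
  have "S * (N * (1 + g0)) < 1 - N * (g + g0)" using mainS Npos by (simp add: pos_less_divide_eq)
  then have "N * (S + g + g0 + S * g0) < 1" by (simp add: algebra_simps)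
  then have key: "S + g + g0 + S * g0 < 1 / N" using N2 by (simp add: less_divide_eq mult.commute)
  have Nc: "N = 2^(n+1) * (n+1)" unfolding Neq by (simp add: algebra_simps)
  obtain \<theta> \<eta> where th: "0 < \<theta>" "\<theta> < 1" and eta: "g + S < \<eta>"
      and Kle: "((1 + 1/\<theta>)^(n+1) - 1) * (\<eta> + g0 + \<eta>*g0) < 1"
    using choose_params[OF gnn g0nn S0 Nc key gN g0N] by blast
  define K where "K = (1 + 1/\<theta>)^m - 1"
  have K0: "K \<ge> 0" unfolding K_def using th by (simp add: one_le_power)
  obtain f where f: "\<forall>i<m. f i \<in> E \<and> f i \<noteq> 0 \<and> \<theta> * norm (f i) \<le> infdist (f i) (Ysp W0 f i)"
    using basis_construct[OF W0c W0cl E(1) E(4) e(1) e(2) th, of m] unfolding m_def by auto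
  have cb: "\<And>c. (\<Sum>i<m. cmod (c i) * norm (f i)) \<le> K * infdist (\<Sum>i<m. c i *\<^sub>C f i) W0"
    using coeff_bound[OF W0c _ th(1), of m f] f unfolding K_def by auto
  have "\<forall>i. \<exists>y. i < m \<longrightarrow> y \<in> radical Q V \<and> norm (f i - y) \<le> \<eta> * norm (f i)"
    using close_general[OF QV RW h c psd gpos E(1,2,3) dl S_def] eta f unfolding g_def by blast
  then obtain y where y: "\<And>i. i < m \<Longrightarrow> y i \<in> radical Q V \<and> norm (f i - y i) \<le> \<eta> * norm (f i)"
    by metis
  have "\<not> cindep_mod y m V0"
  proof
    assume "cindep_mod y m V0"
    then have "enat m \<in> {enat k | k. \<exists>u. (\<forall>i<k. u i \<in> radical Q V) \<and> cindep_mod u k V0}"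
      using y by blast
    then have "enat m \<le> qdim (radical Q V) V0" unfolding qdim_def by (rule Sup_upper)
    then show False using n unfolding m_def by simp
  qed
  then obtain cc where cc: "(\<Sum>i<m. cc i *\<^sub>C y i) \<in> V0" "\<exists>i<m. cc i \<noteq> 0"
    unfolding cindep_mod_def by blast
  define T where "T = (\<Sum>i<m. cmod (cc i) * norm (f i))"
  have Tpos: "T > 0"
  proof -
    obtain i0 where i0: "i0 < m" "cc i0 \<noteq> 0" using cc(2) by blast
    have "cmod (cc i0) * norm (f i0) > 0" using i0 f by simp
    also have "cmod (cc i0) * norm (f i0) \<le> T" unfolding T_def using i0
      by (intro member_le_sum) auto
    finally show ?thesis .
  qed
  define x where "x = (\<Sum>i<m. cc i *\<^sub>C f i)"
  define yy where "yy = (\<Sum>i<m. cc i *\<^sub>C y i)"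
  have "x - yy = (\<Sum>i<m. cc i *\<^sub>C (f i - y i))"
    unfolding x_def yy_def by (simp add: sum_subtractf cv.scale_right_diff_distrib)
  then have "norm (x - yy) \<le> (\<Sum>i<m. norm (cc i *\<^sub>C (f i - y i)))" by (simp add: norm_sum)
  also have "\<dots> \<le> (\<Sum>i<m. cmod (cc i) * (\<eta> * norm (f i)))"
    using y by (intro sum_mono) (simp add: norm_scaleC mult_left_mono)
  also have "\<dots> = \<eta> * T" unfolding T_def by (simp add: sum_distrib_left algebra_simps)
  finally have xy: "norm (x - yy) \<le> \<eta> * T" .
  have "norm x \<le> (\<Sum>i<m. norm (cc i *\<^sub>C f i))" unfolding x_def by (rule norm_sum)
  also have "\<dots> = T" unfolding T_def by (simp add: norm_scaleC)
  finally have nx: "norm x \<le> T" .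
  have nyy: "norm yy \<le> T + \<eta> * T"
    using norm_triangle_ineq4[of x "x - yy"] nx xy by simp
  have "infdist yy W0 \<le> g0 * norm yy" unfolding g0_def
    by (rule gap_le[OF V0c W0c]) (use cc(1) yy_def in simp)
  also have "\<dots> \<le> g0 * (T + \<eta> * T)" using nyy g0nn by (simp add: mult_left_mono)
  finally have iyy: "infdist yy W0 \<le> g0 * (T + \<eta> * T)" .
  have "infdist x W0 \<le> infdist yy W0 + dist x yy" by (rule infdist_triangle)
  also have "\<dots> \<le> g0 * (T + \<eta> * T) + \<eta> * T" using iyy xy by (simp add: dist_norm)
  also have "\<dots> = T * (\<eta> + g0 + \<eta> * g0)" by (simp add: algebra_simps)
  finally have ix: "infdist x W0 \<le> T * (\<eta> + g0 + \<eta> * g0)" .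
  have "T \<le> K * infdist x W0" using cb[of cc] unfolding T_def x_def .
  also have "\<dots> \<le> K * (T * (\<eta> + g0 + \<eta> * g0))" using ix K0 by (simp add: mult_left_mono)
  also have "\<dots> = T * (K * (\<eta> + g0 + \<eta> * g0))" by (simp add: algebra_simps)
  also have "\<dots> < T * 1" using Kle Tpos unfolding K_def m_def by (intro mult_strict_left_mono) auto
  finally show False by simp
qed

theorem proposition4p6:
  fixes Q R :: "'a::{complex_normed_vector, complete_space} \<Rightarrow> 'a \<Rightarrow> complex"
    and V W V0 W0 :: "'a set"
    and h :: complex and c :: real and n :: nat
  assumes QV: "bounded_symmetric_pair Q V"
    and RW: "bounded_symmetric_pair R W"
    and h: "h \<in> {1, -1}"
    and c: "c \<ge> 0"
    and psd: "\<forall>x\<in>V. Re (h * Q x x) \<ge> 0"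
    and gpos: "gamma_form Q V > 0"
    and V0: "closed_csubspace V0" "V0 \<subseteq> radical Q V"
    and W0: "closed_csubspace W0" "W0 \<subseteq> radical R W"
    and n: "qdim (radical Q V) V0 = enat n"
    and small: "gap W V + gap V0 W0 < 1 / (2 ^ (n + 1) * (n + 1))"
    and main: "let N = (2::real) ^ (n + 1) * (n + 1);
                   \<delta> = N * gap W V / (1 - N * gap W V);
                   d = real_of_ereal (inverse (gamma_form Q V));
                   e = 2 * delta_c c Q V R W;
                   f = 2 * delta_c c Q V R W + 2 * c
               in sqrt (d * (2 + \<delta>) * (e + f * \<delta>))
                  < (1 - N * (gap W V + gap V0 W0)) / (N * (1 + gap V0 W0))"
  shows "neg_index (\<lambda>x y. h * R x y) W + qdim (radical R W) W0 \<le> enat n"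
  unfolding neg_index_def qdim_def
proof (rule enat_sup_sum)
  show "\<exists>u. (\<forall>i<0. u i \<in> W) \<and> cindep_mod u 0 {0} \<and>
      (\<forall>c. (\<Sum>i<0. c i *\<^sub>C u i) \<noteq> 0 \<longrightarrow> Re (h * R (\<Sum>i<0. c i *\<^sub>C u i) (\<Sum>i<0. c i *\<^sub>C u i)) < 0)"
    by (auto simp: cindep_mod_def)
  show "\<exists>u. (\<forall>i<0. u i \<in> radical R W) \<and> cindep_mod u 0 W0"
    by (auto simp: cindep_mod_def)
next
  fix k1 k2
  assume "\<exists>u. (\<forall>i<k1. u i \<in> W) \<and> cindep_mod u k1 {0} \<and>
      (\<forall>c. (\<Sum>i<k1. c i *\<^sub>C u i) \<noteq> 0 \<longrightarrow> Re (h * R (\<Sum>i<k1. c i *\<^sub>C u i) (\<Sum>i<k1. c i *\<^sub>C u i)) < 0)"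
  then obtain u where uW: "\<forall>i<k1. u i \<in> W" and uind: "cindep_mod u k1 {0}"
    and uneg: "\<And>c. (\<Sum>i<k1. c i *\<^sub>C u i) \<noteq> 0 \<Longrightarrow> Re (h * R (\<Sum>i<k1. c i *\<^sub>C u i) (\<Sum>i<k1. c i *\<^sub>C u i)) < 0"
    by blast
  assume "\<exists>u. (\<forall>i<k2. u i \<in> radical R W) \<and> cindep_mod u k2 W0"
  then obtain w where wR: "\<forall>i<k2. w i \<in> radical R W" and wind: "cindep_mod w k2 W0" by blast
  note Wc = bsp_csub[OF RW]
  note Rc = radical_csub[OF RW]
  have radW: "radical R W \<subseteq> W" by (rule radical_sub)
  have W0c: "csubspace W0" using W0(1) by (simp add: closed_csubspace_def)
  define Lu where "Lu = {(\<Sum>i<k1. a i *\<^sub>C u i) | a. True}"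
  define E where "E = {a + b | a b. a \<in> Lu \<and> b \<in> radical R W}"
  define e where "e i = (if i < k1 then u i else w (i - k1))" for i
  have Lu0: "0 \<in> Lu" unfolding Lu_def by (auto intro!: exI[of _ "\<lambda>_. 0"] simp: cv.scale_zero_left)
  have Luadd: "x + y \<in> Lu" if xy: "x \<in> Lu" "y \<in> Lu" for x y
  proof -
    obtain a b where "x = (\<Sum>i<k1. a i *\<^sub>C u i)" "y = (\<Sum>i<k1. b i *\<^sub>C u i)" using xy unfolding Lu_def by blast
    then have "x + y = (\<Sum>i<k1. (a i + b i) *\<^sub>C u i)" by (simp add: scaleC_add_left sum.distrib)
    then show ?thesis unfolding Lu_def by (auto intro!: exI[of _ "\<lambda>i. a i + b i"])
  qed
  have Luscale: "t *\<^sub>C x \<in> Lu" if xL: "x \<in> Lu" for x t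
  proof -
    obtain a where "x = (\<Sum>i<k1. a i *\<^sub>C u i)" using xL unfolding Lu_def by blast
    then have "t *\<^sub>C x = (\<Sum>i<k1. (t * a i) *\<^sub>C u i)" by (simp add: cv.scale_sum_right scaleC_scaleC)
    then show ?thesis unfolding Lu_def by (auto intro!: exI[of _ "\<lambda>i. t * a i"])
  qed
  have LuW: "Lu \<subseteq> W" unfolding Lu_def using csub_lincomb[OF Wc] uW by blast
  have Ecs: "csubspace E" unfolding csubspace_def
  proof (intro conjI ballI allI)
    show "0 \<in> E" unfolding E_def using Lu0 csub_zero[OF Rc] by force
  next
    fix x y assume "x \<in> E" "y \<in> E"
    then obtain a1 b1 a2 b2 where "x = a1 + b1" "y = a2 + b2" "a1 \<in> Lu" "a2 \<in> Lu"
      "b1 \<in> radical R W" "b2 \<in> radical R W" unfolding E_def by blast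
    moreover have "x + y = (a1 + a2) + (b1 + b2)" using calculation by (simp add: algebra_simps)
    ultimately show "x + y \<in> E" unfolding E_def using Luadd csub_add[OF Rc] by blast
  next
    fix t x assume "x \<in> E"
    then obtain a1 b1 where "x = a1 + b1" "a1 \<in> Lu" "b1 \<in> radical R W" unfolding E_def by blast
    moreover have "t *\<^sub>C x = t *\<^sub>C a1 + t *\<^sub>C b1" using calculation by (simp add: scaleC_add_right)
    ultimately show "t *\<^sub>C x \<in> E" unfolding E_def using Luscale csub_scale[OF Rc] by blast
  qed
  have EW: "E \<subseteq> W" unfolding E_def using LuW radW csub_add[OF Wc] by blast
  have Eneg: "\<forall>x\<in>E. Re (h * R x x) \<le> 0"
  proof
    fix x assume "x \<in> E"
    then obtain a b where ab: "x = a + b" "a \<in> Lu" "b \<in> radical R W" unfolding E_def by blast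
    obtain cc where a: "a = (\<Sum>i<k1. cc i *\<^sub>C u i)" using ab(2) unfolding Lu_def by blast
    have "R x x = R a a" using form_rad[OF RW _ ab(3)] ab LuW by auto
    moreover have "Re (h * R a a) \<le> 0"
    proof (cases "a = 0")
      case True then show ?thesis using form_zero[OF RW csub_zero[OF Wc]] by simp
    next
      case False then show ?thesis using uneg[of cc] a by fastforce
    qed
    ultimately show "Re (h * R x x) \<le> 0" by simp
  qed
  have W0E: "W0 \<subseteq> E"
  proof
    fix x assume "x \<in> W0"
    then have "x = 0 + x" "x \<in> radical R W" using W0(2) by auto
    then show "x \<in> E" unfolding E_def using Lu0 by blast
  qed
  have eE: "e i \<in> E" if "i < k1 + k2" for i
  proof (cases "i < k1")
    case True
    have "(\<Sum>j<k1. (if j = i then 1 else 0) *\<^sub>C u j) = (\<Sum>j<k1. if j = i then u j else 0)"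
      by (rule sum.cong) (auto simp: scaleC_one cv.scale_zero_left)
    also have "\<dots> = u i" using True by simp
    finally have "u i \<in> Lu" unfolding Lu_def by (auto intro!: exI[of _ "\<lambda>j. if j = i then 1 else 0"])
    then have "u i + 0 \<in> E" unfolding E_def using csub_zero[OF Rc] by blast
    then show ?thesis using True by (simp add: e_def)
  next
    case False
    then have "w (i - k1) \<in> radical R W" using wR that by simp
    then have "0 + w (i - k1) \<in> E" unfolding E_def using Lu0 by blast
    then show ?thesis using False by (simp add: e_def)
  qed
  have eind: "cindep_mod e (k1 + k2) W0"
    unfolding cindep_mod_def
  proof (intro allI impI)
    fix cc i assume s: "(\<Sum>i<k1 + k2. cc i *\<^sub>C e i) \<in> W0" and i: "i < k1 + k2"
    define A where "A = (\<Sum>i<k1. cc i *\<^sub>C u i)"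
    define B where "B = (\<Sum>j<k2. cc (k1 + j) *\<^sub>C w j)"
    have split: "(\<Sum>i<k1 + k2. cc i *\<^sub>C e i) = (\<Sum>i<k1. cc i *\<^sub>C e i) + (\<Sum>j<k2. cc (k1 + j) *\<^sub>C e (k1 + j))"
      by (rule sum_split_add)
    have eA: "(\<Sum>i<k1. cc i *\<^sub>C e i) = A" unfolding A_def by (rule sum.cong) (auto simp: e_def)
    have eB: "(\<Sum>j<k2. cc (k1 + j) *\<^sub>C e (k1 + j)) = B" unfolding B_def by (rule sum.cong) (auto simp: e_def)
    have sAB: "A + B \<in> W0" using s unfolding split eA eB .
    have BR: "B \<in> radical R W" unfolding B_def by (rule csub_lincomb[OF Rc]) (use wR in blast)
    have ABR: "A + B \<in> radical R W" using W0(2) sAB by blast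
    have "(A + B) - B \<in> radical R W" by (rule csub_diff[OF Rc ABR BR])
    then have AR: "A \<in> radical R W" by simp
    then have AW: "A \<in> W" using radW by blast
    have RAA: "R A A = 0" using AR AW unfolding radical_def by blast
    have A0: "A = 0"
    proof (rule ccontr)
      assume "A \<noteq> 0"
      then have "Re (h * R A A) < 0" using uneg[of cc] unfolding A_def by blast
      then show False using RAA by simp
    qed
    then have c1: "\<forall>i<k1. cc i = 0" using uind[unfolded cindep_mod_def, rule_format, of cc] unfolding A_def by simp
    have "B \<in> W0" using sAB A0 by simp
    then have c2: "\<forall>j<k2. cc (k1 + j) = 0" using wind[unfolded cindep_mod_def, rule_format, of "\<lambda>j. cc (k1 + j)"] unfolding B_def by simp
    show "cc i = 0"
    proof (cases "i < k1")
      case True then show ?thesis using c1 by blast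
    next
      case False
      then have "i = k1 + (i - k1)" "i - k1 < k2" using i by auto
      then show ?thesis using c2 by metis
    qed
  qed
  show "k1 + k2 \<le> n"
  proof (rule ccontr)
    assume "\<not> k1 + k2 \<le> n"
    then have m: "n + 1 \<le> k1 + k2" by simp
    have e1: "\<And>i. i < n + 1 \<Longrightarrow> e i \<in> E" using eE m by simp
    have e2: "cindep_mod e (n + 1) W0" by (rule cindep_trunc[OF eind m])
    show False
      by (rule core[OF QV RW h c psd gpos V0 W0 n small main Ecs EW Eneg W0E e1 e2])
  qed
qed

end
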